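(* Let $n$ and $r$ be integers such that $r\geq 3$ and $n\geq r(r-1)\big((r-1)(r-2)+1\big)$. If $(r^2-r)$ divides $n$ and an affine plane of order $r$ exists, then there exists a graph $G$ on $n$ vertices with $$\delta(G) = \left(1-\frac{r-2}{r^2-r}\right)n-2$$ such that $\mathrm{mc}_r(G)< \frac{n}{r-1}$.
   Context: An affine plane of order $q$ is a $q$-uniform hypergraph on $q^2$ vertices (points) with $q(q+1)$ edges (lines) such that each pair of distinct points lies in exactly one line. $\delta(G)$ denotes the minimum degree of $G$. An $r$-coloring of $G$ means a coloring of the edges of $G$ with $r$ colors. For a graph $G$ and a positive integer $r$, $\mathrm{mc}_r(G)$ is the largest integer $m$ such that in every $r$-coloring of the edges of $G$ there is a monochromatic component (a maximal connected subgraph all of whose edges have one color) with at least $m$ vertices. *)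

theory Defs
  imports Complex_Main
begin

definition affine_plane :: "'a set \<Rightarrow> 'a set set \<Rightarrow> nat \<Rightarrow> bool" where
  "affine_plane P L q \<longleftrightarrow>
     finite P \<and> card P = q^2 \<and> finite L \<and> card L = q * (q + 1) \<and>
     (\<forall>l\<in>L. l \<subseteq> P \<and> card l = q) \<and>
     (\<forall>x\<in>P. \<forall>y\<in>P. x \<noteq> y \<longrightarrow> (\<exists>!l. l \<in> L \<and> x \<in> l \<and> y \<in> l))"

definition affine_plane_exists :: "nat \<Rightarrow> bool" where
  "affine_plane_exists q \<longleftrightarrow> (\<exists>(P :: nat set) L. affine_plane P L q)"

definition simple_graph :: "'a set \<Rightarrow> 'a set set \<Rightarrow> bool" where
  "simple_graph V E \<longleftrightarrow> finite V \<and> (\<forall>e\<in>E. e \<subseteq> V \<and> card e = 2)"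

definition degree :: "'a set set \<Rightarrow> 'a \<Rightarrow> nat" where
  "degree E v = card {e \<in> E. v \<in> e}"

definition min_degree :: "'a set \<Rightarrow> 'a set set \<Rightarrow> nat" where
  "min_degree V E = Min (degree E ` V)"

definition r_colouring :: "nat \<Rightarrow> 'a set set \<Rightarrow> ('a set \<Rightarrow> nat) \<Rightarrow> bool" where
  "r_colouring r E c \<longleftrightarrow> (\<forall>e\<in>E. c e < r)"

definition colour_adj :: "'a set set \<Rightarrow> ('a set \<Rightarrow> nat) \<Rightarrow> nat \<Rightarrow> ('a \<times> 'a) set" where
  "colour_adj E c i = {(x, y). {x, y} \<in> E \<and> c {x, y} = i}"

definition mono_component :: "'a set \<Rightarrow> 'a set set \<Rightarrow> ('a set \<Rightarrow> nat) \<Rightarrow> nat \<Rightarrow> 'a set \<Rightarrow> bool" where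
  "mono_component V E c i C \<longleftrightarrow>
     (\<exists>u\<in>V. C = {v \<in> V. (u, v) \<in> (colour_adj E c i)\<^sup>*})"

definition mc :: "nat \<Rightarrow> 'a set \<Rightarrow> 'a set set \<Rightarrow> nat" where
  "mc r V E = (GREATEST m. \<forall>c. r_colouring r E c \<longrightarrow>
       (\<exists>i<r. \<exists>C. mono_component V E c i C \<and> card C \<ge> m))"

end

theory Submission
  imports Defs "HOL-Library.Nat_Bijection"
begin


definition par :: "'a set \<Rightarrow> 'a set \<Rightarrow> bool" where
  "par l l' \<longleftrightarrow> l = l' \<or> l \<inter> l' = {}"

lemma par_refl: "par l l" by (simp add: par_def)
lemma par_sym: "par l l' \<Longrightarrow> par l' l" by (auto simp: par_def)

locale AP =
  fixes P :: "nat set" and L :: "nat set set" and q :: nat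
  assumes ap: "affine_plane P L q" and q3: "q \<ge> 3"
begin

lemma finP: "finite P" and cardP: "card P = q^2" and finL: "finite L"
  and lsub: "l \<in> L \<Longrightarrow> l \<subseteq> P" and lcard: "l \<in> L \<Longrightarrow> card l = q"
  and uniq: "x \<in> P \<Longrightarrow> y \<in> P \<Longrightarrow> x \<noteq> y \<Longrightarrow> \<exists>!l. l \<in> L \<and> x \<in> l \<and> y \<in> l"
  using ap unfolding affine_plane_def by auto

lemma lfin: "l \<in> L \<Longrightarrow> finite l"
  using lsub finP finite_subset by blast

lemma two_pts: "l1 \<in> L \<Longrightarrow> l2 \<in> L \<Longrightarrow> x \<in> l1 \<Longrightarrow> y \<in> l1 \<Longrightarrow> x \<in> l2 \<Longrightarrow> y \<in> l2 \<Longrightarrow> x \<noteq> y \<Longrightarrow> l1 = l2"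
  using uniq lsub by blast

lemma card_Lx: assumes x: "x \<in> P" shows "card {l \<in> L. x \<in> l} = q + 1"
proof -
  let ?X = "{l \<in> L. x \<in> l}"
  have eq: "P - {x} = (\<Union>l\<in>?X. l - {x})"
  proof
    show "P - {x} \<subseteq> (\<Union>l\<in>?X. l - {x})"
    proof
      fix y assume "y \<in> P - {x}"
      then obtain l where "l \<in> L" "x \<in> l" "y \<in> l" using uniq[of x y] x by auto
      then show "y \<in> (\<Union>l\<in>?X. l - {x})" using \<open>y \<in> P - {x}\<close> by auto
    qed
    show "(\<Union>l\<in>?X. l - {x}) \<subseteq> P - {x}" using lsub by auto
  qed
  have finX: "finite ?X" using finL by auto
  have "card (P - {x}) = (\<Sum>l\<in>?X. card (l - {x}))"
    unfolding eq
  proof (rule card_UN_disjoint)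
    show "finite ?X" by (rule finX)
    show "\<forall>l\<in>?X. finite (l - {x})" using lfin by auto
    show "\<forall>i\<in>?X. \<forall>j\<in>?X. i \<noteq> j \<longrightarrow> (i - {x}) \<inter> (j - {x}) = {}"
      using two_pts by blast
  qed
  also have "\<dots> = (\<Sum>l\<in>?X. q - 1)"
    by (rule sum.cong) (auto simp: lcard)
  also have "\<dots> = card ?X * (q - 1)" by simp
  finally have "card ?X * (q - 1) = q^2 - 1" using x finP cardP by simp
  moreover have "q^2 - 1 = (q + 1) * (q - 1)" using q3
    by (simp add: power2_eq_square algebra_simps)
  ultimately have "card ?X * (q - 1) = (q + 1) * (q - 1)" by simp
  moreover have "q - 1 \<noteq> 0" using q3 by simp
  ultimately show ?thesis using mult_right_cancel by blast
qed


definition line :: "nat \<Rightarrow> nat \<Rightarrow> nat set" where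
  "line x y = (THE l. l \<in> L \<and> x \<in> l \<and> y \<in> l)"

lemma line: assumes "x \<in> P" "y \<in> P" "x \<noteq> y"
  shows "line x y \<in> L" "x \<in> line x y" "y \<in> line x y"
    "\<And>l. l \<in> L \<Longrightarrow> x \<in> l \<Longrightarrow> y \<in> l \<Longrightarrow> line x y = l"
proof -
  have "\<exists>!l. l \<in> L \<and> x \<in> l \<and> y \<in> l" using uniq assms by blast
  then have th: "line x y \<in> L \<and> x \<in> line x y \<and> y \<in> line x y"
    unfolding line_def by (rule theI')
  then show "line x y \<in> L" "x \<in> line x y" "y \<in> line x y" by auto
  fix l assume "l \<in> L" "x \<in> l" "y \<in> l"
  then show "line x y = l" using th two_pts assms(3) by blast
qed

lemma playfair: assumes l: "l \<in> L" and x: "x \<in> P"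
  shows "\<exists>!l'. l' \<in> L \<and> x \<in> l' \<and> par l l'"
proof (cases "x \<in> l")
  case True
  show ?thesis
  proof
    show "l \<in> L \<and> x \<in> l \<and> par l l" using l True par_refl by blast
    fix l' assume "l' \<in> L \<and> x \<in> l' \<and> par l l'"
    then show "l' = l" using True unfolding par_def by blast
  qed
next
  case False
  let ?X = "{l' \<in> L. x \<in> l'}"
  let ?M = "(\<lambda>y. line x y) ` l"
  have lP: "l \<subseteq> P" using lsub l by blast
  have xy: "y \<in> l \<Longrightarrow> x \<noteq> y" for y using False by blast
  have lxy: "line x y \<in> L" "x \<in> line x y" "y \<in> line x y" if "y \<in> l" for y
    using line[of x y] that lP xy x by auto
  have inj: "inj_on (\<lambda>y. line x y) l"
  proof
    fix y1 y2 assume y: "y1 \<in> l" "y2 \<in> l" "line x y1 = line x y2"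
    show "y1 = y2"
    proof (rule ccontr)
      assume ne: "y1 \<noteq> y2"
      have "y2 \<in> line x y1" using lxy[OF y(2)] y(3) by simp
      then have "line x y1 = l"
        using two_pts[of "line x y1" l y1 y2] lxy[OF y(1)] y(1,2) l ne by blast
      then show False using lxy[OF y(1)] False by simp
    qed
  qed
  have cM: "card ?M = q" using card_image[OF inj] lcard l by simp
  have MX: "?M \<subseteq> ?X" using lxy by blast
  have finX: "finite ?X" using finL by simp
  have "card (?X - ?M) = 1"
    using card_Diff_subset[OF finite_subset[OF MX finX] MX] card_Lx[OF x] cM by simp
  then obtain l0 where l0: "?X - ?M = {l0}" using card_1_singletonE by blast
  have iff: "l' \<in> ?X - ?M \<longleftrightarrow> l' \<in> L \<and> x \<in> l' \<and> par l l'" for l'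
  proof
    assume a: "l' \<in> ?X - ?M"
    have "l \<inter> l' = {}"
    proof (rule ccontr)
      assume "l \<inter> l' \<noteq> {}"
      then obtain y where "y \<in> l" "y \<in> l'" by blast
      have yP: "y \<in> P" using lP \<open>y \<in> l\<close> by blast
      have "line x y = l'" by (rule line(4)) (use a yP x xy \<open>y \<in> l\<close> \<open>y \<in> l'\<close> in auto)
      then show False using a \<open>y \<in> l\<close> by auto
    qed
    then show "l' \<in> L \<and> x \<in> l' \<and> par l l'" using a unfolding par_def by blast
  next
    assume a: "l' \<in> L \<and> x \<in> l' \<and> par l l'"
    then have "l \<inter> l' = {}" using False unfolding par_def by blast
    moreover have "l' \<notin> ?M"
    proof
      assume "l' \<in> ?M"
      then obtain y where "y \<in> l" "l' = line x y" by blast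
      then show False using lxy(3)[OF \<open>y \<in> l\<close>] \<open>y \<in> l\<close> \<open>l \<inter> l' = {}\<close> by blast
    qed
    ultimately show "l' \<in> ?X - ?M" using a by auto
  qed
  show ?thesis
  proof (rule ex1I[of _ l0])
    have "l0 \<in> ?X - ?M" using l0 by blast
    then show "l0 \<in> L \<and> x \<in> l0 \<and> par l l0" using iff[of l0] by blast
    fix l' assume "l' \<in> L \<and> x \<in> l' \<and> par l l'"
    then have "l' \<in> ?X - ?M" using iff[of l'] by blast
    then show "l' = l0" using l0 by blast
  qed
qed

lemma par_trans: assumes "l1 \<in> L" "l2 \<in> L" "l3 \<in> L" "par l1 l2" "par l2 l3"
  shows "par l1 l3"
proof (cases "l1 \<inter> l3 = {}")
  case True then show ?thesis by (simp add: par_def)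
next
  case False
  then obtain x where x: "x \<in> l1" "x \<in> l3" by blast
  then have "x \<in> P" using lsub assms by blast
  have "l1 \<in> L \<and> x \<in> l1 \<and> par l2 l1" using assms x par_sym by blast
  moreover have "l3 \<in> L \<and> x \<in> l3 \<and> par l2 l3" using assms x by blast
  ultimately have "l1 = l3" using playfair[OF assms(2) \<open>x \<in> P\<close>] by metis
  then show ?thesis by (simp add: par_refl)
qed

lemma meet: assumes "l \<in> L" "l' \<in> L" "\<not> par l l'" shows "\<exists>x. l \<inter> l' = {x}"
proof -
  from assms obtain x where x: "x \<in> l" "x \<in> l'" unfolding par_def by blast
  have ne: "l \<noteq> l'" using assms(3) by (auto simp: par_def)
  have "y \<in> l \<Longrightarrow> y \<in> l' \<Longrightarrow> y = x" for y
    using two_pts[of l l' x y] assms(1,2) x ne by metis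
  then show ?thesis using x by blast
qed

lemma meet_card: assumes "l \<in> L" "l' \<in> L" "\<not> par l l'" shows "card (l \<inter> l') = 1"
  using meet[OF assms] by auto

lemma meet_same: assumes "l \<in> L" "l' \<in> L" "l \<noteq> l'" "x \<in> l" "x \<in> l'" "y \<in> l" "y \<in> l'"
  shows "x = y"
  using two_pts[of l l' x y] assms by metis

end
locale AP2 = AP +
  fixes R0 l0 l1 l2 :: "nat set" and f :: "nat \<Rightarrow> nat set" and m :: nat
  assumes R0: "R0 \<in> L" and lL: "l0 \<in> L" "l1 \<in> L" "l2 \<in> L"
    and np0: "\<not> par l0 R0" and p01: "par l0 l1" and p02: "par l0 l2"
    and d01: "l0 \<noteq> l1" and d02: "l0 \<noteq> l2" and d12: "l1 \<noteq> l2"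
    and fL: "\<And>i. i < q \<Longrightarrow> f i \<in> L" and fnp: "\<And>i. i < q \<Longrightarrow> \<not> par (f i) R0"
    and fsurj: "\<And>l. l \<in> L \<Longrightarrow> \<not> par l R0 \<Longrightarrow> \<exists>i<q. par (f i) l"
    and mbig: "m \<ge> (q - 1) * (q - 2) + 1"
begin

definition Z where "Z = (l0 - R0) \<union> (l1 \<inter> R0)"
definition H where "H = (l1 - R0) \<union> (l2 \<inter> R0)"
definition w where "w p = (if p \<in> Z then 0 else if p \<in> H then m + q - 2 else m - 1)"

lemma disj: "l0 \<inter> l1 = {}" "l0 \<inter> l2 = {}" "l1 \<inter> l2 = {}"
proof -
  show "l0 \<inter> l1 = {}" using p01 d01 unfolding par_def by blast
  show "l0 \<inter> l2 = {}" using p02 d02 unfolding par_def by blast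
  have "par l1 l2" using par_trans[OF lL(2) lL(1) lL(3)] par_sym[OF p01] p02 by blast
  then show "l1 \<inter> l2 = {}" using d12 unfolding par_def by blast
qed

lemma np12: "\<not> par l1 R0" "\<not> par l2 R0"
proof -
  show "\<not> par l1 R0"
  proof
    assume "par l1 R0" then have "par l0 R0" using par_trans[OF lL(1) lL(2) R0] p01 by blast
    then show False using np0 by blast
  qed
  show "\<not> par l2 R0"
  proof
    assume "par l2 R0" then have "par l0 R0" using par_trans[OF lL(1) lL(3) R0] p02 by blast
    then show False using np0 by blast
  qed
qed

lemma ZH: "Z \<inter> H = {}"
  unfolding Z_def H_def using disj by blast

lemma m1: "m \<ge> 1" using mbig by simp

lemma wkey: "w p + (m - 1) * (if p \<in> Z then 1 else 0) = (m - 1) + (q - 1) * (if p \<in> H then 1 else 0)"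
  using ZH m1 q3 unfolding w_def by auto

lemma sum_ind: "finite S \<Longrightarrow> (\<Sum>p\<in>S. c * (if p \<in> A then 1 else 0)) = c * card (S \<inter> A)"
proof -
  assume S: "finite S"
  have "(\<Sum>p\<in>S. c * (if p \<in> A then 1 else 0)) = c * (\<Sum>p\<in>S. (if p \<in> A then 1 else 0))"
    by (simp add: sum_distrib_left)
  also have "(\<Sum>p\<in>S. (if p \<in> A then 1 else 0)) = (\<Sum>p\<in>{p\<in>S. p \<in> A}. (1::nat))"
    using sum.inter_filter[OF S, of "\<lambda>_. 1::nat" "\<lambda>p. p \<in> A"] by simp
  also have "\<dots> = card (S \<inter> A)" by (simp add: Int_def)
  finally show ?thesis .
qed

lemma sumS: assumes S: "finite S"
  shows "sum w S + (m - 1) * card (S \<inter> Z) = card S * (m - 1) + (q - 1) * card (S \<inter> H)"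
proof -
  have "sum w S + (m - 1) * card (S \<inter> Z) = (\<Sum>p\<in>S. w p + (m - 1) * (if p \<in> Z then 1 else 0))"
    by (simp add: sum.distrib sum_ind[OF S])
  also have "\<dots> = (\<Sum>p\<in>S. (m - 1) + (q - 1) * (if p \<in> H then 1 else 0))"
    using wkey by simp
  also have "\<dots> = card S * (m - 1) + (q - 1) * card (S \<inter> H)"
    by (simp add: sum.distrib sum_ind[OF S])
  finally show ?thesis .
qed

lemma row_ZH: assumes R: "R \<in> L" "par R0 R"
  shows "card (R \<inter> Z) = 1" "card (R \<inter> H) = 1"
proof -
  have "card (R \<inter> Z) = 1 \<and> card (R \<inter> H) = 1"
  proof (cases "R = R0")
    case True
    have "R \<inter> Z = l1 \<inter> R0" unfolding Z_def True by blast
    moreover have "R \<inter> H = l2 \<inter> R0" unfolding H_def True by blast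
    ultimately show ?thesis using meet_card[OF lL(2) R0 np12(1)] meet_card[OF lL(3) R0 np12(2)] by simp
  next
    case False
    then have RR0: "R0 \<inter> R = {}" using R unfolding par_def by blast
    have nR0: "\<not> par R l0"
    proof
      assume "par R l0" then have "par R0 l0" using par_trans[OF R0 R(1) lL(1)] R by blast
      then show False using np0 par_sym by blast
    qed
    have nR1: "\<not> par R l1"
    proof
      assume "par R l1" then have "par R0 l1" using par_trans[OF R0 R(1) lL(2)] R by blast
      then show False using np12 par_sym by blast
    qed
    have "R \<inter> Z = R \<inter> l0" unfolding Z_def using RR0 by blast
    moreover have "R \<inter> H = R \<inter> l1" unfolding H_def using RR0 by blast
    ultimately show ?thesis using meet_card[OF R(1) lL(1) nR0] meet_card[OF R(1) lL(2) nR1] by simp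
  qed
  then show "card (R \<inter> Z) = 1" "card (R \<inter> H) = 1" by auto
qed

lemma row_sum: assumes R: "R \<in> L" "par R0 R"
  shows "sum w R = (q - 1) * m"
proof -
  have "sum w R + (m - 1) = q * (m - 1) + (q - 1)"
    using sumS[OF lfin[OF R(1)]] row_ZH[OF R] lcard[OF R(1)] by simp
  moreover have "q * (m - 1) = (q - 1) * (m - 1) + (m - 1)" using q3 by (cases q) auto
  ultimately have "sum w R = (q - 1) * (m - 1) + (q - 1)" by linarith
  also have "\<dots> = (q - 1) * m" using m1 by (cases m) auto
  finally show ?thesis .
qed

end

context AP2 begin

lemma line_HZ: assumes l: "l \<in> L" "\<not> par l R0" and h2: "card (l \<inter> H) \<ge> 2"
  shows "l \<inter> Z \<noteq> {}"
proof -
  have lR0: "l \<noteq> R0" using l par_refl by metis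
  obtain x y where xy: "x \<in> l \<inter> H" "y \<in> l \<inter> H" "x \<noteq> y"
  proof -
    have "\<not> card (l \<inter> H) \<le> 1" using h2 by simp
    then obtain x where x: "x \<in> l \<inter> H" using card_le_Suc0_iff_eq[of "l \<inter> H"] lfin[OF l(1)]
      by (metis One_nat_def card.empty ex_in_conv le0)
    have "\<not> (\<forall>y \<in> l \<inter> H. y = x)"
    proof
      assume "\<forall>y \<in> l \<inter> H. y = x"
      then have "l \<inter> H \<subseteq> {x}" by blast
      then have "card (l \<inter> H) \<le> 1" using card_mono[of "{x}"] by fastforce
      then show False using h2 by simp
    qed
    then obtain y where "y \<in> l \<inter> H" "y \<noteq> x" by blast
    then show ?thesis using that x by blast
  qed
  have case2: "l \<inter> Z \<noteq> {}" if a: "a \<in> l" "a \<in> l2" "a \<in> R0" and b: "b \<in> l" "b \<in> l1" "b \<notin> R0" for a b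
  proof -
    have "a \<notin> l1" using a disj by blast
    then have "l \<noteq> l1" using a by blast
    then have "\<not> par l l1" using b unfolding par_def by blast
    then have "\<not> par l l0"
      using par_trans[OF l(1) lL(1) lL(2)] p01 by blast
    then obtain c where c: "c \<in> l" "c \<in> l0" unfolding par_def by blast
    have "c \<notin> R0"
    proof
      assume "c \<in> R0"
      then have "c = a" using meet_same[OF l(1) R0 lR0] c a by blast
      then show False using c a disj by blast
    qed
    then have "c \<in> Z" using c unfolding Z_def by blast
    then show ?thesis using c by blast
  qed
  show ?thesis
  proof (cases "x \<in> l1 - R0")
    case x1: True
    show ?thesis
    proof (cases "y \<in> l1 - R0")
      case True
      then have "l = l1" using two_pts[OF l(1) lL(2)] x1 xy by blast
      moreover obtain z where "l1 \<inter> R0 = {z}" using meet[OF lL(2) R0 np12(1)] by blast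
      ultimately show ?thesis unfolding Z_def by blast
    next
      case False
      then have "y \<in> l2 \<inter> R0" using xy unfolding H_def by blast
      then show ?thesis using case2[of y x] xy x1 by blast
    qed
  next
    case False
    then have x2: "x \<in> l2 \<inter> R0" using xy unfolding H_def by blast
    show ?thesis
    proof (cases "y \<in> l1 - R0")
      case True
      then show ?thesis using case2[of x y] xy x2 by blast
    next
      case False
      then have "y \<in> l2 \<inter> R0" using xy unfolding H_def by blast
      then have "x = y" using meet_same[OF l(1) R0 lR0] x2 xy by blast
      then show ?thesis using xy by blast
    qed
  qed
qed

lemma line_sum: assumes l: "l \<in> L" "\<not> par l R0"
  shows "sum w l \<le> q * m - 1"
proof -
  have finl: "finite l" using lfin l by blast
  have eq: "sum w l + (m - 1) * card (l \<inter> Z) = q * (m - 1) + (q - 1) * card (l \<inter> H)"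
    using sumS[OF finl] lcard[OF l(1)] by simp
  show ?thesis
  proof (cases "card (l \<inter> H) \<le> 1")
    case True
    then have "(q - 1) * card (l \<inter> H) \<le> q - 1" by (metis mult.right_neutral mult_le_mono2)
    then have "sum w l \<le> q * (m - 1) + (q - 1)" using eq by linarith
    also have "\<dots> = q * m - 1" using m1 q3 by (cases m) auto
    finally show ?thesis .
  next
    case False
    then have "l \<inter> Z \<noteq> {}" using line_HZ l by simp
    then have z1: "card (l \<inter> Z) \<ge> 1" using finl by (simp add: card_gt_0_iff Suc_le_eq)
    have "card (l \<inter> H) \<le> card (l - (l \<inter> Z))"
      using ZH finl by (intro card_mono) auto
    also have "\<dots> = q - card (l \<inter> Z)" using finl lcard[OF l(1)] by (simp add: card_Diff_subset)
    finally have hq: "card (l \<inter> H) \<le> q - 1" using z1 by linarith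
    have A: "(q - 1) * card (l \<inter> H) \<le> (q - 1) * (q - 1)" using hq by simp
    have B: "(m - 1) \<le> (m - 1) * card (l \<inter> Z)" using z1 by simp
    have C: "(q - 1) * (q - 2) \<le> m - 1" using mbig by simp
    obtain k where k: "q = k + 3" using q3 by (metis add.commute le_iff_add)
    obtain j where j: "m = j + 1" using m1 by (metis add.commute le_iff_add)
    have "sum w l + (m - 1) \<le> q * (m - 1) + (q - 1) * (q - 1)" using eq A B by linarith
    then have D: "sum w l + j \<le> (k + 3) * j + (k + 2) * (k + 2)" using k j by simp
    have C': "(k + 2) * (k + 1) \<le> j" using C k j by simp
    have "sum w l \<le> (k + 3) * (j + 1) - 1" using D C' by (simp add: algebra_simps)
    then show ?thesis using k j by simp
  qed
qed

lemma card_Z: "card Z = q" and card_H: "card H = q"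
proof -
  have f0: "finite l0" "finite l1" "finite l2" using lfin lL by auto
  have c0: "card (l0 - R0) = q - 1"
    using meet_card[OF lL(1) R0 np0] lcard[OF lL(1)] f0 by (simp add: card_Diff_subset_Int Int_commute)
  have c1: "card (l1 - R0) = q - 1"
    using meet_card[OF lL(2) R0 np12(1)] lcard[OF lL(2)] f0 by (simp add: card_Diff_subset_Int Int_commute)
  have "card Z = card (l0 - R0) + card (l1 \<inter> R0)"
    unfolding Z_def by (rule card_Un_disjoint) (use f0 disj in auto)
  then show "card Z = q" using c0 meet_card[OF lL(2) R0 np12(1)] q3 by simp
  have "card H = card (l1 - R0) + card (l2 \<inter> R0)"
    unfolding H_def by (rule card_Un_disjoint) (use f0 disj in auto)
  then show "card H = q" using c1 meet_card[OF lL(3) R0 np12(2)] q3 by simp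
qed

lemma ZP: "Z \<subseteq> P" and HP: "H \<subseteq> P"
  unfolding Z_def H_def using lsub lL by auto

lemma total: "sum w P = q * (q - 1) * m"
proof -
  have "sum w P + (m - 1) * q = q^2 * (m - 1) + (q - 1) * q"
    using sumS[OF finP] cardP card_Z card_H Int_absorb1[OF ZP] Int_absorb1[OF HP] by (simp add: Int_commute)
  then have "sum w P + (m - 1) * q = q * q * (m - 1) + (q - 1) * q" by (simp add: power2_eq_square)
  moreover obtain k where k: "q = k + 1" using q3 by (metis add.commute le_iff_add le_trans one_le_numeral)
  moreover obtain j where j: "m = j + 1" using m1 by (metis add.commute le_iff_add)
  ultimately have "sum w P + j * (k + 1) = (k + 1) * (k + 1) * j + k * (k + 1)" by simp
  then have "sum w P = (k + 1) * k * (j + 1)" by (simp add: algebra_simps)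
  then show ?thesis using k j by simp
qed

end

context AP2 begin

definition V :: "nat set" where "V = (\<lambda>(p, k). prod_encode (p, k)) ` (SIGMA p:P. {..<w p})"
definition tp :: "nat \<Rightarrow> nat" where "tp v = fst (prod_decode v)"
definition row :: "nat \<Rightarrow> nat set" where "row x = (THE l. l \<in> L \<and> x \<in> l \<and> par R0 l)"
definition adj :: "nat \<Rightarrow> nat \<Rightarrow> bool" where
  "adj u v \<longleftrightarrow> u \<noteq> v \<and> (tp u = tp v \<or> row (tp u) \<noteq> row (tp v))"
definition E :: "nat set set" where "E = {{u, v} | u v. u \<in> V \<and> v \<in> V \<and> adj u v}"

lemma V_sub: "{v \<in> V. tp v \<in> S} = (\<lambda>(p, k). prod_encode (p, k)) ` (SIGMA p:(S \<inter> P). {..<w p})"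
  unfolding V_def tp_def by (auto simp: image_iff)

lemma cnt: assumes "S \<subseteq> P" shows "card {v \<in> V. tp v \<in> S} = sum w S"
proof -
  have inj: "inj_on (\<lambda>(p, k). prod_encode (p, k)) X" for X
    using inj_prod_encode unfolding inj_on_def by (auto simp: case_prod_beta)
  have fS: "finite S" using assms finP finite_subset by blast
  have "card {v \<in> V. tp v \<in> S} = card (SIGMA p:(S \<inter> P). {..<w p})"
    unfolding V_sub by (rule card_image[OF inj])
  also have "\<dots> = sum w S" using fS assms by (simp add: card_SigmaI Int_absorb2)
  finally show ?thesis .
qed

lemma finV: "finite V" unfolding V_def using finP by auto

lemma cardV: "card V = q * (q - 1) * m"
proof -
  have "V = {v \<in> V. tp v \<in> P}" unfolding V_def tp_def by auto
  then show ?thesis using cnt[of P] total by simp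
qed

lemma V_tp: "v \<in> V \<Longrightarrow> tp v \<in> P \<and> w (tp v) > 0"
  unfolding V_def tp_def by auto

lemma row: assumes "x \<in> P" shows "row x \<in> L" "x \<in> row x" "par R0 (row x)"
  "\<And>l. l \<in> L \<Longrightarrow> x \<in> l \<Longrightarrow> par R0 l \<Longrightarrow> row x = l"
proof -
  have ex: "\<exists>!l. l \<in> L \<and> x \<in> l \<and> par R0 l" using playfair[OF R0 assms] .
  then have th: "row x \<in> L \<and> x \<in> row x \<and> par R0 (row x)" unfolding row_def by (rule theI')
  then show "row x \<in> L" "x \<in> row x" "par R0 (row x)" by auto
  fix l assume "l \<in> L" "x \<in> l" "par R0 l"
  then show "row x = l" using ex th by blast
qed

lemma row_eq: assumes "x \<in> P" "y \<in> P" shows "row y = row x \<longleftrightarrow> y \<in> row x"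
proof
  assume "row y = row x" then show "y \<in> row x" using row(2)[OF assms(2)] by simp
next
  assume "y \<in> row x" then show "row y = row x" using row(4)[OF assms(2)] row(1,3)[OF assms(1)] by metis
qed

lemma wpos: "p \<in> P \<Longrightarrow> w p > 0 \<Longrightarrow> w p \<ge> m - 1"
  using q3 unfolding w_def by (auto split: if_splits)

lemma adj_sym: "adj u v \<Longrightarrow> adj v u" unfolding adj_def by auto

lemma deg_set: assumes v: "v \<in> V" shows "{e \<in> E. v \<in> e} = (\<lambda>u. {v, u}) ` {u \<in> V. adj v u}"
proof
  show "{e \<in> E. v \<in> e} \<subseteq> (\<lambda>u. {v, u}) ` {u \<in> V. adj v u}"
  proof
    fix e assume "e \<in> {e \<in> E. v \<in> e}"
    then obtain a b where e: "e = {a, b}" "a \<in> V" "b \<in> V" "adj a b" "v \<in> e" unfolding E_def by blast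
    show "e \<in> (\<lambda>u. {v, u}) ` {u \<in> V. adj v u}"
    proof (cases "v = a")
      case True then show ?thesis using e by blast
    next
      case False then have "v = b" using e by blast
      then have "e = {v, a}" "a \<in> {u \<in> V. adj v u}" using e adj_sym by auto
      then show ?thesis by (intro image_eqI[of _ _ a]) auto
    qed
  qed
  show "(\<lambda>u. {v, u}) ` {u \<in> V. adj v u} \<subseteq> {e \<in> E. v \<in> e}"
  proof
    fix e assume "e \<in> (\<lambda>u. {v, u}) ` {u \<in> V. adj v u}"
    then obtain u where "u \<in> V" "adj v u" "e = {v, u}" by blast
    then show "e \<in> {e \<in> E. v \<in> e}" unfolding E_def using v by blast
  qed
qed

lemma degree_eq: assumes v: "v \<in> V" shows "degree E v = card {u \<in> V. adj v u}"
proof -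
  have "inj_on (\<lambda>u. {v, u}) {u \<in> V. adj v u}"
    unfolding inj_on_def by (auto simp: doubleton_eq_iff)
  then show ?thesis unfolding degree_def deg_set[OF v] by (rule card_image)
qed

lemma nbr: assumes v: "v \<in> V"
  shows "{u \<in> V. adj v u} = (V - {v}) - {u \<in> V. tp u \<in> row (tp v) - {tp v}}"
proof -
  have tv: "tp v \<in> P" using V_tp v by blast
  show ?thesis
  proof (intro set_eqI iffI)
    fix u assume "u \<in> {u \<in> V. adj v u}"
    then have u: "u \<in> V" "adj v u" by auto
    then have "tp u \<in> P" using V_tp by blast
    then have r1: "row (tp u) = row (tp v) \<longleftrightarrow> tp u \<in> row (tp v)" by (rule row_eq[OF tv])
    then have re: "row (tp v) = row (tp u) \<longleftrightarrow> tp u \<in> row (tp v)" by (simp only: eq_commute[of "row (tp v)"])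
    show "u \<in> (V - {v}) - {u \<in> V. tp u \<in> row (tp v) - {tp v}}"
    proof -
      have "u \<noteq> v" "tp v = tp u \<or> row (tp v) \<noteq> row (tp u)" using u(2) unfolding adj_def by auto
      moreover have "tp u \<notin> row (tp v) - {tp v}"
      proof (cases "tp v = tp u")
        case True then show ?thesis by simp
      next
        case False then have "row (tp v) \<noteq> row (tp u)" using calculation by blast
        then have "tp u \<notin> row (tp v)" using re by blast
        then show ?thesis by blast
      qed
      ultimately show ?thesis using u(1) by blast
    qed
  next
    fix u assume a: "u \<in> (V - {v}) - {u \<in> V. tp u \<in> row (tp v) - {tp v}}"
    then have "tp u \<in> P" using V_tp by blast
    then have r1: "row (tp u) = row (tp v) \<longleftrightarrow> tp u \<in> row (tp v)" by (rule row_eq[OF tv])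
    then have re: "row (tp v) = row (tp u) \<longleftrightarrow> tp u \<in> row (tp v)" by (simp only: eq_commute[of "row (tp v)"])
    show "u \<in> {u \<in> V. adj v u}"
    proof -
      have "u \<in> V" "u \<noteq> v" "tp u \<notin> row (tp v) - {tp v}" using a by blast+
      have "tp v = tp u \<or> row (tp v) \<noteq> row (tp u)"
      proof (cases "tp v = tp u")
        case True then show ?thesis by simp
      next
        case False
        then have "tp u \<notin> row (tp v)" using \<open>tp u \<notin> row (tp v) - {tp v}\<close> by auto
        then show ?thesis using re by simp
      qed
      then have "adj v u" using \<open>u \<noteq> v\<close> unfolding adj_def by auto
      then show ?thesis using \<open>u \<in> V\<close> by blast
    qed
  qed
qed

lemma degree_formula: assumes v: "v \<in> V"
  shows "degree E v + 1 + ((q - 1) * m - w (tp v)) = q * (q - 1) * m"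
    and "w (tp v) \<le> (q - 1) * m"
proof -
  have tv: "tp v \<in> P" using V_tp v by blast
  let ?B = "{u \<in> V. tp u \<in> row (tp v) - {tp v}}"
  have rP: "row (tp v) \<subseteq> P" using row(1)[OF tv] lsub by blast
  have frow: "finite (row (tp v))" using lfin row(1)[OF tv] by blast
  have cB: "card ?B = sum w (row (tp v) - {tp v})" using cnt[of "row (tp v) - {tp v}"] rP by blast
  have rs: "sum w (row (tp v)) = (q - 1) * m" using row_sum row(1,3)[OF tv] by blast
  have "sum w (row (tp v)) = w (tp v) + sum w (row (tp v) - {tp v})"
    using sum.remove[OF frow row(2)[OF tv]] by simp
  then have cB2: "card ?B + w (tp v) = (q - 1) * m" using cB rs by simp
  then show "w (tp v) \<le> (q - 1) * m" by simp
  have Bsub: "?B \<subseteq> V - {v}" by auto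
  have "card {u \<in> V. adj v u} = card (V - {v}) - card ?B"
    unfolding nbr[OF v] by (rule card_Diff_subset) (use finV in auto)
  moreover have "card (V - {v}) = card V - 1" using v finV by simp
  moreover have "card ?B \<le> card (V - {v})" using Bsub finV by (intro card_mono) auto
  moreover have "card V \<ge> 1" using v finV by (metis One_nat_def card_0_eq empty_iff less_one not_le)
  ultimately show "degree E v + 1 + ((q - 1) * m - w (tp v)) = q * (q - 1) * m"
    using degree_eq[OF v] cB2 cardV by linarith
qed

end

context AP2 begin

lemma m3: "m \<ge> 3"
proof -
  have "(q - 1) * (q - 2) \<ge> 2 * 1" using q3 by (intro mult_le_mono) auto
  then show ?thesis using mbig by simp
qed

definition dmin where "dmin = q * (q - 1) * m - 1 - ((q - 1) * m - (m - 1))"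

lemma deg_ge: assumes v: "v \<in> V" shows "degree E v \<ge> dmin"
proof -
  have t: "tp v \<in> P" "w (tp v) > 0" using V_tp v by auto
  have "w (tp v) \<ge> m - 1" using wpos t by blast
  then show ?thesis using degree_formula[OF v] unfolding dmin_def by linarith
qed

lemma p0_ex: "\<exists>p0. p0 \<in> P \<and> w p0 = m - 1"
proof -
  obtain p0 where p0: "l0 \<inter> R0 = {p0}" using meet[OF lL(1) R0 np0] by blast
  then have "p0 \<in> l0" "p0 \<in> R0" by auto
  then have "p0 \<notin> l1" "p0 \<notin> l2" using disj by auto
  then have "p0 \<notin> Z" "p0 \<notin> H" unfolding Z_def H_def using \<open>p0 \<in> R0\<close> by auto
  moreover have "p0 \<in> P" using \<open>p0 \<in> l0\<close> lsub lL by blast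
  ultimately show ?thesis unfolding w_def by auto
qed

lemma min_deg: "min_degree V E = dmin"
proof -
  obtain p0 where p0: "p0 \<in> P" "w p0 = m - 1" using p0_ex by blast
  let ?v = "prod_encode (p0, 0)"
  have v: "?v \<in> V" unfolding V_def using p0 m3 by (auto intro!: image_eqI[of _ _ "(p0, 0)"])
  have tv: "tp ?v = p0" unfolding tp_def by simp
  have "degree E ?v + 1 + ((q - 1) * m - (m - 1)) = q * (q - 1) * m"
    using degree_formula(1)[OF v] p0 tv by simp
  then have "degree E ?v = dmin" unfolding dmin_def by linarith
  then show ?thesis unfolding min_degree_def
  proof (intro Min_eqI)
    show "finite (degree E ` V)" using finV by simp
    show "\<And>y. y \<in> degree E ` V \<Longrightarrow> dmin \<le> y" using deg_ge by blast
    show "dmin \<in> degree E ` V" using v \<open>degree E ?v = dmin\<close> by (metis image_eqI)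
  qed
qed

lemma V_ne: "V \<noteq> {}"
proof -
  obtain p0 where p0: "p0 \<in> P" "w p0 = m - 1" using p0_ex by blast
  have "prod_encode (p0, 0) \<in> V" unfolding V_def using p0 m3 by (auto intro!: image_eqI[of _ _ "(p0, 0)"])
  then show ?thesis by blast
qed

definition lab :: "nat \<Rightarrow> nat \<Rightarrow> nat set" where
  "lab i x = (THE l. l \<in> L \<and> x \<in> l \<and> par (f i) l)"

lemma lab: assumes "i < q" "x \<in> P"
  shows "lab i x \<in> L" "x \<in> lab i x" "par (f i) (lab i x)"
    "\<And>l. l \<in> L \<Longrightarrow> x \<in> l \<Longrightarrow> par (f i) l \<Longrightarrow> lab i x = l"
proof -
  have ex: "\<exists>!l. l \<in> L \<and> x \<in> l \<and> par (f i) l" using playfair[OF fL[OF assms(1)] assms(2)] .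
  then have th: "lab i x \<in> L \<and> x \<in> lab i x \<and> par (f i) (lab i x)" unfolding lab_def by (rule theI')
  then show "lab i x \<in> L" "x \<in> lab i x" "par (f i) (lab i x)" by auto
  fix l assume "l \<in> L" "x \<in> l" "par (f i) l"
  then show "lab i x = l" using ex th by blast
qed

definition good :: "nat set \<Rightarrow> nat \<Rightarrow> bool" where
  "good e i \<longleftrightarrow> i < q \<and> (\<forall>x\<in>e. \<forall>y\<in>e. lab i (tp x) = lab i (tp y))"

definition col :: "nat set \<Rightarrow> nat" where "col e = (LEAST i. good e i)"

lemma edge_good: assumes e: "e \<in> E" shows "\<exists>i. good e i"
proof -
  obtain u v where uv: "e = {u, v}" "u \<in> V" "v \<in> V" "adj u v" using e unfolding E_def by blast
  have tu: "tp u \<in> P" and tv: "tp v \<in> P" using V_tp uv by auto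
  show ?thesis
  proof (cases "tp u = tp v")
    case True
    then have "good e 0" unfolding good_def uv(1) using q3 by auto
    then show ?thesis by blast
  next
    case False
    then have rne: "row (tp u) \<noteq> row (tp v)" using uv(4) unfolding adj_def by blast
    let ?l = "line (tp u) (tp v)"
    have l: "?l \<in> L" "tp u \<in> ?l" "tp v \<in> ?l" using line(1-3)[OF tu tv False] by auto
    have "\<not> par ?l R0"
    proof
      assume "par ?l R0"
      then have pl: "par R0 ?l" by (rule par_sym)
      have "row (tp u) = ?l" using row(4)[OF tu l(1) l(2) pl] .
      moreover have "row (tp v) = ?l" using row(4)[OF tv l(1) l(3) pl] .
      ultimately show False using rne by simp
    qed
    then obtain i where i: "i < q" "par (f i) ?l" using fsurj[OF l(1)] by blast
    have "lab i (tp u) = ?l" using lab(4)[OF i(1) tu l(1) l(2) i(2)] .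
    moreover have "lab i (tp v) = ?l" using lab(4)[OF i(1) tv l(1) l(3) i(2)] .
    ultimately have "good e i" unfolding good_def uv(1) using i(1) by auto
    then show ?thesis by blast
  qed
qed

lemma col_good: "e \<in> E \<Longrightarrow> good e (col e)"
  unfolding col_def using edge_good by (metis LeastI_ex)

lemma colouring: "r_colouring q E col"
  unfolding r_colouring_def using col_good good_def by blast

lemma rt_lab: assumes "(u, v) \<in> (colour_adj E col i)\<^sup>*"
  shows "lab i (tp v) = lab i (tp u)"
  using assms
proof (induction rule: rtrancl_induct)
  case base then show ?case by simp
next
  case (step y z)
  then have "{y, z} \<in> E" "col {y, z} = i" unfolding colour_adj_def by auto
  then have "good {y, z} i" using col_good by metis
  then have "lab i (tp z) = lab i (tp y)" unfolding good_def by blast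
  then show ?case using step by simp
qed

lemma comp_card: assumes i: "i < q" and C: "mono_component V E col i C"
  shows "card C \<le> q * m - 1"
proof -
  obtain u where u: "u \<in> V" "C = {v \<in> V. (u, v) \<in> (colour_adj E col i)\<^sup>*}"
    using C unfolding mono_component_def by blast
  have tu: "tp u \<in> P" using V_tp u by blast
  let ?l = "lab i (tp u)"
  have lL': "?l \<in> L" using lab[OF i tu] by blast
  have lsubP: "?l \<subseteq> P" using lsub lL' by blast
  have np: "\<not> par ?l R0"
  proof
    assume "par ?l R0"
    then have "par (f i) R0" using par_trans[OF fL[OF i] lL' R0] lab(3)[OF i tu] by blast
    then show False using fnp[OF i] by blast
  qed
  have "C \<subseteq> {v \<in> V. tp v \<in> ?l}"
  proof
    fix v assume "v \<in> C"
    then have v: "v \<in> V" "(u, v) \<in> (colour_adj E col i)\<^sup>*" using u by auto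
    have "tp v \<in> P" using V_tp v by blast
    then have "tp v \<in> lab i (tp v)" using lab(2)[OF i] by blast
    then show "v \<in> {v \<in> V. tp v \<in> ?l}" using rt_lab[OF v(2)] v(1) by simp
  qed
  then have "card C \<le> card {v \<in> V. tp v \<in> ?l}" using finV by (intro card_mono) auto
  also have "\<dots> = sum w ?l" using cnt[OF lsubP] .
  also have "\<dots> \<le> q * m - 1" using line_sum[OF lL' np] .
  finally show ?thesis .
qed

lemma mc_le: "mc q V E \<le> q * m - 1"
proof -
  let ?P = "\<lambda>k. \<forall>c. r_colouring q E c \<longrightarrow> (\<exists>i<q. \<exists>C. mono_component V E c i C \<and> k \<le> card C)"
  have bound: "y \<le> q * m - 1" if "?P y" for y
  proof -
    have "\<exists>i<q. \<exists>C. mono_component V E col i C \<and> y \<le> card C" using that colouring by blast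
    then obtain i C where "i < q" "mono_component V E col i C" "y \<le> card C" by blast
    then show ?thesis using comp_card by fastforce
  qed
  have P0: "?P 0"
  proof (intro allI impI)
    fix c :: "nat set \<Rightarrow> nat"
    obtain u where "u \<in> V" using V_ne by blast
    then have "mono_component V E c 0 {v \<in> V. (u, v) \<in> (colour_adj E c 0)\<^sup>*}"
      unfolding mono_component_def by (intro bexI[of _ u] refl)
    moreover have "0 < q" using q3 by simp
    ultimately show "\<exists>i<q. \<exists>C. mono_component V E c i C \<and> 0 \<le> card C" by blast
  qed
  have "?P (Greatest ?P)" by (rule GreatestI_nat[where P = ?P and k = 0 and b = "q * m - 1", OF P0 bound])
  then have "Greatest ?P \<le> q * m - 1" by (rule bound)
  then show ?thesis unfolding mc_def .
qed

lemma simple: "simple_graph V E"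
  unfolding simple_graph_def E_def adj_def using finV by auto

end

context AP begin

lemma params: "\<exists>R0 l0 l1 l2 f. R0 \<in> L \<and> l0 \<in> L \<and> l1 \<in> L \<and> l2 \<in> L \<and> \<not> par l0 R0 \<and> par l0 l1 \<and> par l0 l2
   \<and> l0 \<noteq> l1 \<and> l0 \<noteq> l2 \<and> l1 \<noteq> l2 \<and> (\<forall>i<q. f i \<in> L \<and> \<not> par (f i) R0)
   \<and> (\<forall>l\<in>L. \<not> par l R0 \<longrightarrow> (\<exists>i<q. par (f i) l))"
proof -
  have cL: "card L = q * (q + 1)" using ap unfolding affine_plane_def by blast
  then have "L \<noteq> {}" using q3 by auto
  then obtain R0 where R0: "R0 \<in> L" by blast
  have "card R0 = q" using lcard R0 by blast
  then have "R0 \<noteq> {}" using q3 by auto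
  then obtain pt0 where pt0: "pt0 \<in> R0" by blast
  have oP: "pt0 \<in> P" using pt0 lsub R0 by blast
  let ?D = "{l \<in> L. pt0 \<in> l} - {R0}"
  have finD: "finite ?D" using finL by simp
  have cD: "card ?D = q" using card_Lx[OF oP] R0 pt0 finL by simp
  obtain g where g: "bij_betw g {0..<card ?D} ?D" using ex_bij_betw_nat_finite[OF finD] by blast
  then have g': "bij_betw g {..<q} ?D" using cD by (simp add: atLeast0LessThan)
  have gi: "g i \<in> L \<and> pt0 \<in> g i \<and> g i \<noteq> R0" if "i < q" for i
  proof -
    have "i \<in> {..<q}" using that by simp
    then have "g i \<in> ?D" using bij_betwE[OF g'] by blast
    then show ?thesis by simp
  qed
  have gnp: "\<not> par (g i) R0" if "i < q" for i
    using gi[OF that] pt0 unfolding par_def by blast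
  have gsurj: "\<exists>i<q. par (g i) l" if l: "l \<in> L" "\<not> par l R0" for l
  proof -
    obtain l' where l': "l' \<in> L" "pt0 \<in> l'" "par l l'" using playfair[OF l(1) oP] by blast
    have "l' \<noteq> R0" using l' l(2) by blast
    then have "l' \<in> ?D" using l' by blast
    then have "l' \<in> g ` {..<q}" using bij_betw_imp_surj_on[OF g'] by simp
    then obtain i where "i \<in> {..<q}" "g i = l'" by (auto simp: image_iff)
    then have "i < q" "g i = l'" by auto
    then show ?thesis using par_sym[OF l'(3)] by blast
  qed
  define l0 where "l0 = g 0"
  have l0: "l0 \<in> L" "\<not> par l0 R0" using gi gnp q3 unfolding l0_def by auto
  have fin0: "finite l0" using lfin l0 by blast
  have "card l0 < card P" using lcard[OF l0(1)] cardP q3 by (simp add: power2_eq_square)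
  then have "\<not> P \<subseteq> l0" using card_mono[OF fin0] by (meson not_le)
  then obtain x1 where x1: "x1 \<in> P" "x1 \<notin> l0" by blast
  obtain l1 where l1: "l1 \<in> L" "x1 \<in> l1" "par l0 l1" using playfair[OF l0(1) x1(1)] by blast
  have fin1: "finite l1" using lfin l1 by blast
  have "card (l0 \<union> l1) \<le> q + q" using card_Un_le[of l0 l1] lcard l0 l1 by simp
  also have "\<dots> < q * q"
  proof -
    have "3 * q \<le> q * q" using mult_le_mono1[OF q3] .
    then show ?thesis using q3 by linarith
  qed
  finally have "card (l0 \<union> l1) < card P" using cardP by (simp add: power2_eq_square)
  then have "\<not> P \<subseteq> l0 \<union> l1" using card_mono[of "l0 \<union> l1"] fin0 fin1 by (meson finite_UnI not_le)
  then obtain x2 where x2: "x2 \<in> P" "x2 \<notin> l0 \<union> l1" by blast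
  obtain l2 where l2: "l2 \<in> L" "x2 \<in> l2" "par l0 l2" using playfair[OF l0(1) x2(1)] by blast
  have "l0 \<noteq> l1" "l0 \<noteq> l2" "l1 \<noteq> l2" using x1 l1 x2 l2 by auto
  then show ?thesis using R0 l0 l1 l2 gi gnp gsurj by blast
qed

end

theorem theorem1p3:
  fixes n r :: nat
  assumes "r \<ge> 3"
    and "n \<ge> r * (r - 1) * ((r - 1) * (r - 2) + 1)"
    and "(r^2 - r) dvd n"
    and "affine_plane_exists r"
  shows "\<exists>(V :: nat set) E. simple_graph V E \<and> card V = n \<and>
           real (min_degree V E) = (1 - (real r - 2) / (real r ^ 2 - real r)) * real n - 2 \<and>
           real (mc r V E) < real n / (real r - 1)"
proof -
  obtain P :: "nat set" and L where ap: "affine_plane P L r"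
    using assms(4) unfolding affine_plane_exists_def by blast
  interpret AP P L r using ap assms(1) by unfold_locales
  obtain R0 l0 l1 l2 f where pr: "R0 \<in> L \<and> l0 \<in> L \<and> l1 \<in> L \<and> l2 \<in> L \<and> \<not> par l0 R0 \<and> par l0 l1 \<and> par l0 l2
   \<and> l0 \<noteq> l1 \<and> l0 \<noteq> l2 \<and> l1 \<noteq> l2 \<and> (\<forall>i<r. f i \<in> L \<and> \<not> par (f i) R0)
   \<and> (\<forall>l\<in>L. \<not> par l R0 \<longrightarrow> (\<exists>i<r. par (f i) l))" using params by blast
  have rr: "r^2 - r = r * (r - 1)" by (simp add: power2_eq_square diff_mult_distrib2)
  obtain m where n: "n = r * (r - 1) * m" using assms(3) unfolding rr by (auto elim: dvdE)
  have rpos: "r * (r - 1) > 0" using assms(1) by simp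
  have mb: "m \<ge> (r - 1) * (r - 2) + 1"
  proof (rule mult_left_le_imp_le[of "r * (r - 1)"])
    show "r * (r - 1) * ((r - 1) * (r - 2) + 1) \<le> r * (r - 1) * m" using assms(2) unfolding n .
    show "0 < r * (r - 1)" by (rule rpos)
  qed
  interpret G: AP2 P L r R0 l0 l1 l2 f m
    using pr mb by unfold_locales auto
  obtain k where k: "r = k + 3" using assms(1) by (metis add.commute le_iff_add)
  obtain j where j: "m = j + 1" using G.m1 by (metis add.commute le_iff_add)
  have d0: "G.dmin = r * (r - 1) * m - 1 - ((r - 1) * m - (m - 1))" by (rule G.dmin_def)
  have a1: "(r - 1) * m = (r - 2) * m + m" unfolding k by (simp add: algebra_simps)
  have a2: "r * (r - 1) * m = (r - 1) * m + (r - 1) * (r - 1) * m" unfolding k by (simp add: algebra_simps)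
  have a3: "(r - 1) * (r - 1) * m \<ge> m" using G.m1 k by simp
  have dm: "G.dmin + (r - 2) * m + 2 = n"
    unfolding d0 n using a1 a2 a3 G.m1 by linarith
  have rn1: "real (r * (r - 1) * m) = real r * (real r - 1) * real m" using assms(1) by (simp add: of_nat_diff)
  have real_n: "real n = (real r ^ 2 - real r) * real m"
    unfolding n rn1 by (simp add: power2_eq_square algebra_simps)
  have den: "real r ^ 2 - real r \<noteq> 0" using assms(1) by (simp add: power2_eq_square)
  have "real (min_degree G.V G.E) = real n - (real r - 2) * real m - 2"
  proof -
    have "real (G.dmin + (r - 2) * m + 2) = real n" using dm by simp
    then have "real G.dmin + (real r - 2) * real m + 2 = real n" using assms(1) by (simp add: of_nat_diff)
    then show ?thesis using G.min_deg by simp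
  qed
  also have "\<dots> = (1 - (real r - 2) / (real r ^ 2 - real r)) * real n - 2"
    using den unfolding real_n by (simp add: field_simps)
  finally have md: "real (min_degree G.V G.E) = (1 - (real r - 2) / (real r ^ 2 - real r)) * real n - 2" .
  have "real (mc r G.V G.E) \<le> real (r * m - 1)" using G.mc_le by simp
  also have "\<dots> < real r * real m" using assms(1) G.m1 by (simp add: of_nat_diff)
  also have "\<dots> = real n / (real r - 1)"
  proof -
    have "real r - 1 \<noteq> 0" using assms(1) by simp
    then show ?thesis unfolding n rn1 by (simp add: field_simps)
  qed
  finally have mcb: "real (mc r G.V G.E) < real n / (real r - 1)" .
  have cV: "card G.V = n" using G.cardV n by simp
  show ?thesis using G.simple cV md mcb by blast
qed

end
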